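(* Let $a<b$ and let $f:[a,b]\to\mathbb{R}$ be continuous. Then there exists $\eta\in(a,b)$ such that $$f(\eta)=\frac{1}{\eta-a}\int_a^\eta f(t)\,\mathrm{d}t+\frac{\eta-a}{2}\cdot\frac{f(b)-f(a)}{b-a}.$$ *)

theory Defs
  imports "HOL-Analysis.Analysis"
begin

end

theory Submission
  imports Defs
begin

lemma der_interior:
  assumes "(G has_real_derivative D) (at x within {a..b})" "x \<in> {a<..<b}"
  shows "(G has_real_derivative D) (at x)"
proof -
  have "x \<in> interior {a..b}" using assms(2) by simp
  hence e: "at x within {a..b} = at x" by (rule at_within_interior)
  show ?thesis using assms(1) unfolding e .
qed

lemma flett_pos:
  fixes G G' :: "real \<Rightarrow> real"
  assumes ab: "a < b" and Ga: "G a = 0"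
    and der: "\<And>x. x \<in> {a..b} \<Longrightarrow> (G has_real_derivative G' x) (at x within {a..b})"
    and G'a: "G' a = 0" and G'b: "G' b = 0"
    and c: "c \<in> {a<..b}" "G c > 0"
  shows "\<exists>\<eta>\<in>{a<..<b}. G' \<eta> * (\<eta> - a) = G \<eta>"
proof -
  define \<psi> where "\<psi> x = G x / (x - a)" for x
  have psic: "\<psi> c > 0" using c by (simp add: \<psi>_def)
  have lim: "((\<lambda>y. (G y - G a) / (y - a)) \<longlongrightarrow> 0) (at a within {a..b})"
    using der[of a] ab G'a by (simp add: has_field_derivative_iff)
  hence "((\<lambda>y. \<psi> y) \<longlongrightarrow> 0) (at a within {a..b})" using Ga by (simp add: \<psi>_def)
  hence "\<forall>\<^sub>F y in at a within {a..b}. \<psi> y < \<psi> c"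
    using psic by (simp add: order_tendstoD(2))
  then obtain d where d0: "d > 0" and d1: "\<forall>y\<in>{a..b}. y \<noteq> a \<and> dist y a < d \<longrightarrow> \<psi> y < \<psi> c"
    unfolding eventually_at by (elim exE conjE) (rule that)
  have d: "d > 0" "\<And>y. y \<in> {a..b} \<Longrightarrow> y \<noteq> a \<Longrightarrow> dist y a < d \<Longrightarrow> \<psi> y < \<psi> c"
    using d0 d1 by auto
  obtain e where e: "e > 0" "e \<le> c - a" "e \<le> d"
    using d c by (intro that[of "min d (c - a)"]) auto
  define c' where "c' = a + e / 2"
  have c'1: "a < c'" unfolding c'_def using e by linarith
  have c'2: "c' < c" unfolding c'_def using e by linarith
  have c'd: "dist c' a < d" unfolding c'_def dist_real_def using e by simp
  note c' = c'1 c'2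
  have psic': "\<psi> c' < \<psi> c" using d(2)[of c'] c' c c'd by auto
  have dpsi: "(\<psi> has_real_derivative (G' x * (x - a) - G x) / ((x - a) * (x - a))) (at x within {a..b})"
    if "x \<in> {a<..b}" for x
  proof -
    have "((\<lambda>x. G x / (x - a)) has_real_derivative (G' x * (x - a) - G x * 1) / ((x - a) * (x - a))) (at x within {a..b})"
      using that by (intro DERIV_divide der) (auto intro!: derivative_eq_intros)
    then show ?thesis by (simp add: \<psi>_def[abs_def])
  qed
  have cont: "continuous_on {c'..b} \<psi>"
    unfolding continuous_on_eq_continuous_within
  proof (rule ballI)
    fix x assume x: "x \<in> {c'..b}"
    have "(\<psi> has_real_derivative (G' x * (x - a) - G x) / ((x - a) * (x - a))) (at x within {a..b})"
      using x c' by (intro dpsi) auto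
    hence cx: "continuous (at x within {a..b}) \<psi>" by (rule DERIV_continuous)
    show "continuous (at x within {c'..b}) \<psi>"
      by (rule continuous_within_subset[OF cx]) (use c' in auto)
  qed
  obtain m where m: "m \<in> {c'..b}" "\<And>y. y \<in> {c'..b} \<Longrightarrow> \<psi> y \<le> \<psi> m"
    using continuous_attains_sup[OF compact_Icc _ cont] c' c by auto
  have mc: "\<psi> m \<ge> \<psi> c" using m(2)[of c] c c' by auto
  have "m \<noteq> c'" using mc psic' by auto
  moreover have "m \<noteq> b"
  proof
    assume mb: "m = b"
    have "\<psi> b > 0" using mc psic mb by simp
    hence Gb: "G b > 0" using ab by (simp add: \<psi>_def zero_less_divide_iff)
    have "(\<psi> has_real_derivative (G' b * (b - a) - G b) / ((b - a) * (b - a))) (at b within {a..b})"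
      using ab by (intro dpsi) auto
    moreover have "(G' b * (b - a) - G b) / ((b - a) * (b - a)) < 0"
      using G'b Gb ab by (simp add: divide_neg_pos)
    ultimately obtain e where e: "e > 0" "\<And>h. h > 0 \<Longrightarrow> b - h \<in> {a..b} \<Longrightarrow> h < e \<Longrightarrow> \<psi> b < \<psi> (b - h)"
      using has_real_derivative_neg_dec_left by blast
    obtain k where k: "k > 0" "k \<le> e" "k \<le> b - c'"
      using e(1) c' c by (intro that[of "min e (b - c')"]) auto
    define h where "h = k / 2"
    have h: "h > 0" "h < e" "h < b - c'" unfolding h_def using k by linarith+
    have "\<psi> b < \<psi> (b - h)" using h c' c ab by (intro e(2)) auto
    moreover have "\<psi> (b - h) \<le> \<psi> m" using m(2)[of "b - h"] h c' c by auto
    ultimately show False using mb by simp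
  qed
  ultimately have mi: "m \<in> {c'<..<b}" using m(1) by auto
  have dm: "(\<psi> has_real_derivative (G' m * (m - a) - G m) / ((m - a) * (m - a))) (at m)"
    using mi c' by (intro der_interior[of _ _ _ a b] dpsi) auto
  have X: "(G' m * (m - a) - G m) / ((m - a) * (m - a)) = 0"
  proof (rule DERIV_local_max[OF dm])
    show "0 < min (m - c') (b - m)" using mi by auto
    show "\<forall>y. \<bar>m - y\<bar> < min (m - c') (b - m) \<longrightarrow> \<psi> y \<le> \<psi> m"
    proof (intro allI impI)
      fix y assume "\<bar>m - y\<bar> < min (m - c') (b - m)"
      hence "c' \<le> y" "y \<le> b" by (auto simp: abs_if split: if_splits)
      thus "\<psi> y \<le> \<psi> m" using m(2) by auto
    qed
  qed
  have ma: "(m - a) * (m - a) \<noteq> 0" using mi c'1 by simp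
  have "G' m * (m - a) - G m = 0" using X ma by (simp only: divide_eq_0_iff) blast
  hence eqm: "G' m * (m - a) = G m" by simp
  have mab: "m \<in> {a<..<b}" using mi c'1 by simp
  show ?thesis by (rule bexI[where P="\<lambda>\<eta>. G' \<eta> * (\<eta> - a) = G \<eta>", OF eqm mab])
qed

lemma flett:
  fixes G G' :: "real \<Rightarrow> real"
  assumes ab: "a < b" and Ga: "G a = 0"
    and der: "\<And>x. x \<in> {a..b} \<Longrightarrow> (G has_real_derivative G' x) (at x within {a..b})"
    and G'a: "G' a = 0" and G'b: "G' b = 0"
  shows "\<exists>\<eta>\<in>{a<..<b}. G' \<eta> * (\<eta> - a) = G \<eta>"
proof (cases "\<exists>c\<in>{a<..b}. G c > 0")
  case True
  then obtain c where "c \<in> {a<..b}" "G c > 0" by blast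
  then show ?thesis using flett_pos[OF ab Ga der G'a G'b] by blast
next
  case F1: False
  show ?thesis
  proof (cases "\<exists>c\<in>{a<..b}. G c < 0")
    case True
    then obtain c where c: "c \<in> {a<..b}" "- G c > 0" by auto
    have "\<exists>\<eta>\<in>{a<..<b}. - G' \<eta> * (\<eta> - a) = - G \<eta>"
    proof (rule flett_pos[of a b "\<lambda>x. - G x" "\<lambda>x. - G' x" c])
      show "\<And>x. x \<in> {a..b} \<Longrightarrow> ((\<lambda>x. - G x) has_real_derivative - G' x) (at x within {a..b})"
        using der by (rule DERIV_minus)
    qed (use ab Ga G'a G'b c in auto)
    then show ?thesis by auto
  next
    case False
    with F1 have G0: "\<And>x. x \<in> {a<..b} \<Longrightarrow> G x = 0" by force
    define \<eta> where "\<eta> = (a + b) / 2"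
    have \<eta>: "\<eta> \<in> {a<..<b}" using ab by (simp add: \<eta>_def)
    have d\<eta>: "(G has_real_derivative G' \<eta>) (at \<eta>)"
      using \<eta> by (intro der_interior[of _ _ _ a b] der) auto
    have "G' \<eta> = 0"
    proof (rule DERIV_local_max[OF d\<eta>])
      show "0 < min (\<eta> - a) (b - \<eta>)" using \<eta> by auto
      show "\<forall>y. \<bar>\<eta> - y\<bar> < min (\<eta> - a) (b - \<eta>) \<longrightarrow> G y \<le> G \<eta>"
      proof (intro allI impI)
        fix y assume "\<bar>\<eta> - y\<bar> < min (\<eta> - a) (b - \<eta>)"
        hence "a < y" "y \<le> b" by (auto simp: abs_if split: if_splits)
        thus "G y \<le> G \<eta>" using G0[of y] G0[of \<eta>] \<eta> by auto
      qed
    qed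
    hence "G' \<eta> * (\<eta> - a) = G \<eta>" using \<eta> G0[of \<eta>] by simp
    then show ?thesis using \<eta> by blast
  qed
qed

theorem mainTheorem5:
  fixes f :: "real \<Rightarrow> real" and a b :: real
  assumes "a < b" and "continuous_on {a..b} f"
  shows "\<exists>\<eta>\<in>{a<..<b}. f \<eta> = integral {a..\<eta>} f / (\<eta> - a)
            + (\<eta> - a) / 2 * ((f b - f a) / (b - a))"
proof -
  define k where "k = (f b - f a) / (b - a)"
  define G where "G x = integral {a..x} f - f a * (x - a) - k * ((x - a) * (x - a)) / 2" for x
  define G' where "G' x = f x - f a - k * (x - a)" for x
  have der: "(G has_real_derivative G' x) (at x within {a..b})" if x: "x \<in> {a..b}" for x
  proof -
    have i: "((\<lambda>x. integral {a..x} f) has_real_derivative f x) (at x within {a..b})"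
      by (rule integral_has_real_derivative[OF assms(2) x])
    have l: "((\<lambda>x. f a * (x - a)) has_real_derivative f a) (at x within {a..b})"
      by (auto intro!: derivative_eq_intros)
    have q: "((\<lambda>x. k * ((x - a) * (x - a)) / 2) has_real_derivative k * (x - a)) (at x within {a..b})"
      by (auto intro!: derivative_eq_intros simp: field_simps)
    show ?thesis using DERIV_diff[OF DERIV_diff[OF i l] q]
      by (simp add: G_def[abs_def] G'_def)
  qed
  have Ga: "G a = 0" by (simp add: G_def)
  have G'a: "G' a = 0" by (simp add: G'_def)
  have G'b: "G' b = 0" using assms(1) by (simp add: G'_def k_def)
  obtain \<eta> where \<eta>: "\<eta> \<in> {a<..<b}" and eq: "G' \<eta> * (\<eta> - a) = G \<eta>"
    using flett[OF assms(1) Ga der G'a G'b] by blast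
  have ne: "\<eta> - a \<noteq> 0" using \<eta> by simp
  have "f \<eta> * (\<eta> - a) = integral {a..\<eta>} f + (\<eta> - a) * (\<eta> - a) / 2 * k"
  proof -
    have eq': "(f \<eta> - f a - k * (\<eta> - a)) * (\<eta> - a)
        = integral {a..\<eta>} f - f a * (\<eta> - a) - k * ((\<eta> - a) * (\<eta> - a)) / 2"
      using eq by (simp add: G_def G'_def)
    show ?thesis using eq' by (simp add: field_simps)
  qed
  hence "f \<eta> = integral {a..\<eta>} f / (\<eta> - a) + (\<eta> - a) / 2 * k"
    using ne by (simp add: field_simps)
  thus ?thesis using \<eta> by (auto simp: k_def)
qed

end
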